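(* Let $\rho:F_2=\langle a,b\rangle\to PSL(2,\mathbb{C})$ be an irreducible representation with principal character $(\gamma,0,-4)$ (so $\rho(a)$ is parabolic and $\rho(b)$ is elliptic of order two), and let $w$ be a good word. Then $(p_w(\gamma),0,-4)$ is the principal character of a representation $\rho_w:F_2\to PSL(2,\mathbb{C})$, and $\rho_w$ is discrete (i.e. $\rho_w(F_2)$ is a discrete subgroup) if $\rho$ is.
   Context: For $\rho:F_2\to PSL(2,\mathbb{C})$ the principal character is $(\operatorname{tr}[\rho(a),\rho(b)]-2,\ \operatorname{tr}^2\rho(a)-4,\ \operatorname{tr}^2\rho(b)-4)$. For $x,y\in PSL(2,\mathbb{C})$ write $\gamma(x,y)=\operatorname{tr}[x,y]-2$. A good word is a reduced word $w=a^{m_1}ba^{m_2}b\cdots ba^{m_n}$ in the group $\langle a,b\mid b^2=1\rangle\cong\mathbb{Z}*\mathbb{Z}_2$ with $n\ge 3$ (at least two occurrences of $b$) and $m_i\neq0$ for $2\le i\le n-1$. For a good word $w$, $p_w\in\mathbb{Z}[z]$ denotes the word polynomial: the unique (monic, integer) polynomial such that for every parabolic $f\in PSL(2,\mathbb{C})$ and every elliptic $\phi\in PSL(2,\mathbb{C})$ of order two, $\gamma(f,w(f,\phi))=p_w(\gamma(f,\phi))$, where $w(f,\phi)$ is obtained by substituting $a=f$, $b=\phi$. *)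

theory Defs
  imports "HOL-Analysis.Analysis" "HOL-Computational_Algebra.Polynomial"
begin

text \<open>Elements of PSL(2,C) are represented by lifts in SL(2,C) (complex 2x2 matrices of
determinant 1); all quantities below are invariant under the sign change of lifts.
A representation F_2 = <a,b> -> PSL(2,C) is given by the (lifts of the) images A, B
of the two free generators.\<close>

type_synonym cmat = "complex^2^2"

definition commutator :: "cmat \<Rightarrow> cmat \<Rightarrow> cmat" where
  "commutator x y = x ** y ** matrix_inv x ** matrix_inv y"

definition gamma :: "cmat \<Rightarrow> cmat \<Rightarrow> complex" where
  "gamma x y = trace (commutator x y) - 2"

definition principal_char :: "cmat \<Rightarrow> cmat \<Rightarrow> complex \<times> complex \<times> complex" where
  "principal_char A B = (gamma A B, (trace A)^2 - 4, (trace B)^2 - 4)"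

definition parabolic :: "cmat \<Rightarrow> bool" where
  "parabolic x \<longleftrightarrow> det x = 1 \<and> x \<noteq> mat 1 \<and> x \<noteq> - mat 1 \<and> (trace x)^2 = 4"

definition elliptic_order_two :: "cmat \<Rightarrow> bool" where
  "elliptic_order_two x \<longleftrightarrow> det x = 1 \<and> x \<noteq> mat 1 \<and> x \<noteq> - mat 1 \<and>
     (x ** x = mat 1 \<or> x ** x = - mat 1)"

definition irreducible_rep :: "cmat \<Rightarrow> cmat \<Rightarrow> bool" where
  "irreducible_rep A B \<longleftrightarrow>
     \<not> (\<exists>v::complex^2. v \<noteq> 0 \<and> (\<exists>l m. A *v v = l *s v \<and> B *v v = m *s v))"

inductive_set gen_group :: "cmat set \<Rightarrow> cmat set" for S where
  one: "mat 1 \<in> gen_group S"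
| gen: "s \<in> S \<Longrightarrow> s \<in> gen_group S"
| inv: "s \<in> S \<Longrightarrow> matrix_inv s \<in> gen_group S"
| mult: "g \<in> gen_group S \<Longrightarrow> h \<in> gen_group S \<Longrightarrow> g ** h \<in> gen_group S"

text \<open>The image of the group G (of SL(2,C) matrices) in PSL(2,C) is discrete:
every point [g] = {g,-g} of the image is isolated in the quotient topology.\<close>
definition discrete_PSL :: "cmat set \<Rightarrow> bool" where
  "discrete_PSL G \<longleftrightarrow> (\<forall>g\<in>G. \<exists>e>0. \<forall>h\<in>G.
      (dist h g < e \<or> dist h (- g) < e) \<longrightarrow> h = g \<or> h = - g)"

definition discrete_rep :: "cmat \<Rightarrow> cmat \<Rightarrow> bool" where
  "discrete_rep A B \<longleftrightarrow> discrete_PSL (gen_group {A, B})"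

definition mpow :: "cmat \<Rightarrow> int \<Rightarrow> cmat" where
  "mpow f m = (if 0 \<le> m then ((\<lambda>x. f ** x) ^^ nat m) (mat 1)
               else ((\<lambda>x. matrix_inv f ** x) ^^ nat (- m)) (mat 1))"

text \<open>A word a^{m_1} b a^{m_2} b ... b a^{m_n} is encoded by the list [m_1,...,m_n].\<close>
fun word_eval :: "int list \<Rightarrow> cmat \<Rightarrow> cmat \<Rightarrow> cmat" where
  "word_eval [] f p = mat 1"
| "word_eval [m] f p = mpow f m"
| "word_eval (m # ms) f p = mpow f m ** p ** word_eval ms f p"

definition good_word :: "int list \<Rightarrow> bool" where
  "good_word ms \<longleftrightarrow> length ms \<ge> 3 \<and> (\<forall>i. 1 \<le> i \<and> i < length ms - 1 \<longrightarrow> ms ! i \<noteq> 0)"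

definition word_poly :: "int list \<Rightarrow> int poly" where
  "word_poly ms = (THE p. \<forall>f \<phi>. parabolic f \<and> elliptic_order_two \<phi> \<longrightarrow>
       gamma f (word_eval ms f \<phi>) = poly (map_poly of_int p) (gamma f \<phi>))"

end

theory Submission
  imports Defs
begin


definition mat2 :: "complex \<Rightarrow> complex \<Rightarrow> complex \<Rightarrow> complex \<Rightarrow> cmat" where
  "mat2 a b c d = (\<chi> i j. if i = 1 then (if j = 1 then a else b) else (if j = 1 then c else d))"

lemma two_ne_one: "(2::2) \<noteq> 1" by simp

lemma mat2_nth [simp]:
  "mat2 a b c d $ 1 $ 1 = a" "mat2 a b c d $ 1 $ 2 = b"
  "mat2 a b c d $ 2 $ 1 = c" "mat2 a b c d $ 2 $ 2 = d"
  by (simp_all add: mat2_def)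

lemma mat2_eta: "M = mat2 (M$1$1) (M$1$2) (M$2$1) (M$2$2)"
  by (simp add: vec_eq_iff forall_2)

lemma mat2_eq_iff: "mat2 a b c d = mat2 a' b' c' d' \<longleftrightarrow> a = a' \<and> b = b' \<and> c = c' \<and> d = d'"
  by (auto simp: vec_eq_iff forall_2)

lemma mat2_mult [simp]: "mat2 a b c d ** mat2 a' b' c' d' =
   mat2 (a*a' + b*c') (a*b' + b*d') (c*a' + d*c') (c*b' + d*d')"
  by (simp add: vec_eq_iff forall_2 matrix_matrix_mult_def sum_2)

lemma mat2_one: "mat 1 = mat2 1 0 0 1"
  by (simp add: vec_eq_iff forall_2 mat_def)

lemma mat2_neg [simp]: "- mat2 a b c d = mat2 (-a) (-b) (-c) (-d)"
  by (simp add: vec_eq_iff forall_2)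

lemma mat2_det [simp]: "det (mat2 a b c d) = a*d - b*c"
  by (simp add: det_2)

lemma mat2_trace [simp]: "trace (mat2 a b c d) = a + d"
  by (simp add: trace_def sum_2)

lemma mat2_inv: assumes "a*d - b*c = 1"
  shows "matrix_inv (mat2 a b c d) = mat2 d (-b) (-c) a"
proof -
  let ?A = "mat2 a b c d" and ?B = "mat2 d (-b) (-c) a"
  have 1: "?A ** ?B = mat 1" "?B ** ?A = mat 1"
    using assms by (simp_all add: mat2_one mat2_eq_iff algebra_simps)
  show ?thesis unfolding matrix_inv_def
  proof (rule some_equality)
    fix X assume X: "?A ** X = mat 1 \<and> X ** ?A = mat 1"
    have "X = (?B ** ?A) ** X" by (simp only: 1 matrix_mul_lid)
    also have "\<dots> = ?B" using X by (simp only: matrix_mul_assoc[symmetric] matrix_mul_rid)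
    finally show "X = ?B" .
  qed (use 1 in auto)
qed

definition lam :: "complex \<Rightarrow> complex \<Rightarrow> complex \<Rightarrow> cmat \<Rightarrow> complex" where
  "lam p q r X = p * X$1$1 + q * X$2$1 + r * X$1$2 - p * X$2$2"

lemma lam_mat2 [simp]: "lam p q r (mat2 a b c d) = p*a + q*c + r*b - p*d"
  by (simp add: lam_def)

definition Um :: "complex \<Rightarrow> complex \<Rightarrow> complex \<Rightarrow> complex \<Rightarrow> cmat" where
  "Um p q r m = mat2 (1 + m*p) (m*q) (m*r) (1 - m*p)"

lemma obtain_mat2: obtains a b c d where "X = mat2 a b c d"
  by (metis mat2_eta)

lemma lam_neg: "lam p q r (- X) = - lam p q r X"
  by (simp add: lam_def)

lemma neg_mult_left: "(- (X::cmat)) ** (Y::cmat) = - (X ** Y)"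
  by (cases X rule: obtain_mat2, cases Y rule: obtain_mat2) (simp add: algebra_simps)

lemma L1: assumes "p^2 + q*r = 0"
  shows "lam p q r (Um p q r m ** X) = lam p q r X"
proof -
  obtain a b c d where X: "X = mat2 a b c d" by (rule obtain_mat2)
  have "lam p q r (Um p q r m ** X) = lam p q r X + m*(p^2+q*r)*trace X"
    unfolding X Um_def by (simp add: power2_eq_square) algebra
  then show ?thesis using assms by simp
qed

lemma L2: assumes "p^2 + q*r = 0"
  shows "lam p q r (Y ** (Um p q r m ** X)) = lam p q r (Y ** X) + m * lam p q r Y * lam p q r X"
proof -
  obtain a b c d where X: "X = mat2 a b c d" by (rule obtain_mat2)
  obtain a' b' c' d' where Y: "Y = mat2 a' b' c' d'" by (rule obtain_mat2)
  have "lam p q r (Y ** (Um p q r m ** X)) = lam p q r (Y ** X) + m * lam p q r Y * lam p q r X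
     + m*(p^2+q*r)*(trace Y * trace X - trace (Y ** X))"
    unfolding X Y Um_def by (simp add: power2_eq_square) algebra
  then show ?thesis using assms by simp
qed

lemma L3: assumes "trace Y = 0" "det Y = 1"
  shows "lam p q r (Y ** (Y ** X)) = - lam p q r X"
proof -
  obtain a b c d where X: "X = mat2 a b c d" by (rule obtain_mat2)
  obtain a' b' c' d' where Y: "Y = mat2 a' b' c' d'" by (rule obtain_mat2)
  have "lam p q r (Y ** (Y ** X)) = trace Y * lam p q r (Y ** X) - det Y * lam p q r X"
    unfolding X Y by simp algebra
  then show ?thesis using assms by simp
qed

lemma L4: assumes "p^2 + q*r = 0"
  shows "lam p q r (Um p q r m) = 0" "lam p q r (Y ** Um p q r m) = lam p q r Y"
proof -
  have "lam p q r (mat 1) = 0" by (simp add: mat2_one)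
  then show "lam p q r (Um p q r m) = 0" "lam p q r (Y ** Um p q r m) = lam p q r Y"
    using L1[OF assms, of m "mat 1"] L2[OF assms, of Y m "mat 1"] by simp_all
qed

lemma para_form: assumes "det f = 1" "(trace f)^2 = 4"
  shows "\<exists>\<epsilon> p q r. \<epsilon>^2 = 1 \<and> p^2 + q*r = 0 \<and> f = mat2 (\<epsilon>*(1+p)) (\<epsilon>*q) (\<epsilon>*r) (\<epsilon>*(1-p))"
proof -
  obtain a b c d where f: "f = mat2 a b c d" by (rule obtain_mat2)
  define \<epsilon> where "\<epsilon> = (a+d)/2"
  have e2: "\<epsilon>^2 = 1" using assms unfolding f \<epsilon>_def by (simp add: power_divide)
  have ad: "a + d = 2*\<epsilon>" unfolding \<epsilon>_def by simp
  have "a*d - b*c = 1" using assms unfolding f by simp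
  then have bc: "b*c = a*d - 1" by algebra
  show ?thesis
  proof (intro exI conjI)
    show "\<epsilon>^2 = 1" by (rule e2)
    show "(\<epsilon>*a - 1)^2 + (\<epsilon>*b)*(\<epsilon>*c) = 0" using e2 ad bc by algebra
    show "f = mat2 (\<epsilon>*(1+(\<epsilon>*a - 1))) (\<epsilon>*(\<epsilon>*b)) (\<epsilon>*(\<epsilon>*c)) (\<epsilon>*(1-(\<epsilon>*a - 1)))"
      unfolding f mat2_eq_iff using e2 ad by algebra
  qed
qed

lemma pow_step: assumes "p^2 + q*r = 0"
  shows "mat2 (\<epsilon>*(1+p)) (\<epsilon>*q) (\<epsilon>*r) (\<epsilon>*(1-p)) ** mat2 (E*(1+k*p)) (E*(k*q)) (E*(k*r)) (E*(1-k*p))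
    = mat2 (\<epsilon>*E*(1+(k+1)*p)) (\<epsilon>*E*((k+1)*q)) (\<epsilon>*E*((k+1)*r)) (\<epsilon>*E*(1-(k+1)*p))"
  unfolding mat2_mult mat2_eq_iff using assms by algebra

lemma pow_form: assumes "p^2 + q*r = 0"
  shows "((\<lambda>x. mat2 (\<epsilon>*(1+p)) (\<epsilon>*q) (\<epsilon>*r) (\<epsilon>*(1-p)) ** x)^^n) (mat 1) =
     mat2 (\<epsilon>^n*(1+ of_nat n*p)) (\<epsilon>^n*(of_nat n*q)) (\<epsilon>^n*(of_nat n*r)) (\<epsilon>^n*(1- of_nat n*p))"
proof (induction n)
  case 0 then show ?case by (simp add: mat2_one)
next
  case (Suc n)
  show ?case unfolding funpow.simps o_def Suc.IH pow_step[OF assms]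
    by (simp add: algebra_simps)
qed

lemma sign_pow: assumes "\<epsilon>^2 = (1::complex)" shows "\<epsilon>^n = 1 \<or> \<epsilon>^n = -1"
proof -
  have "\<epsilon> = 1 \<or> \<epsilon> = -1" using assms by (metis power2_eq_1_iff)
  then show ?thesis by (cases "even n") auto
qed

lemma mpow_form: assumes "\<epsilon>^2 = 1" "p^2 + q*r = 0"
    and f: "f = mat2 (\<epsilon>*(1+p)) (\<epsilon>*q) (\<epsilon>*r) (\<epsilon>*(1-p))"
  shows "mpow f m = Um p q r (of_int m) \<or> mpow f m = - Um p q r (of_int m)"
proof (cases "0 \<le> m")
  case True
  then have "mpow f m = mat2 (\<epsilon>^nat m*(1+ of_nat (nat m)*p)) (\<epsilon>^nat m*(of_nat (nat m)*q)) (\<epsilon>^nat m*(of_nat (nat m)*r)) (\<epsilon>^nat m*(1- of_nat (nat m)*p))"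
    unfolding mpow_def f using pow_form[OF assms(2)] by simp
  moreover have "of_nat (nat m) = (of_int m :: complex)" using True by simp
  ultimately show ?thesis using sign_pow[OF assms(1), of "nat m"] by (auto simp: Um_def)
next
  case False
  have det: "(\<epsilon>*(1+p))*(\<epsilon>*(1-p)) - (\<epsilon>*q)*(\<epsilon>*r) = 1" using assms(1,2) by algebra
  have inv: "matrix_inv f = mat2 (\<epsilon>*(1+(-p))) (\<epsilon>*(-q)) (\<epsilon>*(-r)) (\<epsilon>*(1-(-p)))"
    unfolding f mat2_inv[OF det] by (simp add: mat2_eq_iff)
  have pq: "(-p)^2 + (-q)*(-r) = 0" using assms(2) by simp
  have "mpow f m = mat2 (\<epsilon>^nat (-m)*(1+ of_nat (nat (-m))*(-p))) (\<epsilon>^nat (-m)*(of_nat (nat (-m))*(-q))) (\<epsilon>^nat (-m)*(of_nat (nat (-m))*(-r))) (\<epsilon>^nat (-m)*(1- of_nat (nat (-m))*(-p)))"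
    unfolding mpow_def inv using False pow_form[OF pq] by simp
  moreover have "of_nat (nat (-m)) = - (of_int m :: complex)" using False by simp
  ultimately show ?thesis using sign_pow[OF assms(1), of "nat (-m)"] by (auto simp: Um_def)
qed

lemma gamma_lam: assumes "\<epsilon>^2 = 1" "p^2 + q*r = 0"
    and f: "f = mat2 (\<epsilon>*(1+p)) (\<epsilon>*q) (\<epsilon>*r) (\<epsilon>*(1-p))" and g: "det g = 1"
  shows "gamma f g = (lam p q r g)^2"
proof -
  have det: "(\<epsilon>*(1+p))*(\<epsilon>*(1-p)) - (\<epsilon>*q)*(\<epsilon>*r) = 1" using assms(1,2) by algebra
  obtain a b c d where gg: "g = mat2 a b c d" by (rule obtain_mat2)
  have dg: "a*d - b*c = 1" using g gg by simp
  show ?thesis unfolding gamma_def commutator_def f gg mat2_inv[OF det] mat2_inv[OF dg]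
    using assms(1,2) dg by simp algebra
qed

lemma mpi_add [simp]: "map_poly (of_int::int\<Rightarrow>'a::comm_ring_1) (p + q) = map_poly of_int p + map_poly of_int q"
  by (rule poly_eqI) (simp add: coeff_map_poly)
lemma mpi_uminus [simp]: "map_poly (of_int::int\<Rightarrow>'a::comm_ring_1) (- p) = - map_poly of_int p"
  by (rule poly_eqI) (simp add: coeff_map_poly)
lemma mpi_diff [simp]: "map_poly (of_int::int\<Rightarrow>'a::comm_ring_1) (p - q) = map_poly of_int p - map_poly of_int q"
  by (rule poly_eqI) (simp add: coeff_map_poly)
lemma mpi_smult [simp]: "map_poly (of_int::int\<Rightarrow>'a::comm_ring_1) (smult a p) = smult (of_int a) (map_poly of_int p)"
  by (rule poly_eqI) (simp add: coeff_map_poly)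
lemma mpi_pCons [simp]: "map_poly (of_int::int\<Rightarrow>'a::comm_ring_1) (pCons a p) = pCons (of_int a) (map_poly of_int p)"
  by (rule map_poly_pCons) simp
lemma mpi_mult [simp]: "map_poly (of_int::int\<Rightarrow>'a::comm_ring_1) (p * q) = map_poly of_int p * map_poly of_int q"
  by (induction p) (simp_all add: algebra_simps)
lemma mpi_power [simp]: "map_poly (of_int::int\<Rightarrow>'a::comm_ring_1) (p ^ n) = map_poly of_int p ^ n"
  by (induction n) simp_all
lemma mpi_inj: "map_poly (of_int::int\<Rightarrow>complex) p = map_poly of_int q \<Longrightarrow> p = q"
  by (metis (no_types, lifting) coeff_map_poly of_int_0 of_int_eq_iff poly_eqI)

lemma neg_mult_right: "(X::cmat) ** (- (Y::cmat)) = - (X ** Y)"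
  by (cases X rule: obtain_mat2, cases Y rule: obtain_mat2) (simp add: algebra_simps)

lemma mpow_lam: assumes "\<epsilon>^2 = 1" "p^2 + q*r = 0"
    and f: "f = mat2 (\<epsilon>*(1+p)) (\<epsilon>*q) (\<epsilon>*r) (\<epsilon>*(1-p))"
  shows "\<exists>\<tau>::complex. \<tau>^2 = 1 \<and> (\<forall>X. lam p q r (mpow f m ** X) = \<tau> * lam p q r X) \<and>
     (\<forall>Y X. lam p q r (Y ** (mpow f m ** X)) = \<tau> * (lam p q r (Y ** X) + of_int m * lam p q r Y * lam p q r X))
   \<and> lam p q r (mpow f m) = 0 \<and> (\<forall>Y. lam p q r (Y ** mpow f m) = \<tau> * lam p q r Y)"
proof -
  have "mpow f m = Um p q r (of_int m) \<or> mpow f m = - Um p q r (of_int m)"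
    by (rule mpow_form[OF assms])
  then show ?thesis
  proof
    assume h: "mpow f m = Um p q r (of_int m)"
    show ?thesis by (rule exI[of _ 1]) (simp add: h L1 L2 L4 assms(2))
  next
    assume h: "mpow f m = - Um p q r (of_int m)"
    show ?thesis by (rule exI[of _ "-1"]) (simp add: h L1 L2 L4 assms(2) neg_mult_left neg_mult_right lam_neg)
  qed
qed

fun wab :: "int list \<Rightarrow> int poly \<times> int poly \<times> bool" where
  "wab [] = (0, 0, False)"
| "wab [m] = (0, 1, False)"
| "wab (m # ms) = (case wab ms of (A, B, s) \<Rightarrow>
      if s then (B, - A + [:m:] * B, False) else (B, - A + [:0, m:] * B, True))"

definition Pw :: "int list \<Rightarrow> int poly" where
  "Pw ms = (case wab ms of (A, B, s) \<Rightarrow> if s then [:0, 1:] * A^2 else A^2)"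

lemma lam_word: assumes "\<epsilon>^2 = 1" "p^2 + q*r = 0"
    and f: "f = mat2 (\<epsilon>*(1+p)) (\<epsilon>*q) (\<epsilon>*r) (\<epsilon>*(1-p))"
    and ph: "trace \<phi> = 0" "det \<phi> = 1"
    and ms: "ms \<noteq> []"
    and c: "c = lam p q r \<phi>"
  shows "\<exists>\<sigma>::complex. \<sigma>^2 = 1 \<and> (case wab ms of (A, B, s) \<Rightarrow>
     lam p q r (word_eval ms f \<phi>) = \<sigma> * (if s then c else 1) * poly (map_poly of_int A) (c^2) \<and>
     lam p q r (\<phi> ** word_eval ms f \<phi>) = \<sigma> * (if s then 1 else c) * poly (map_poly of_int B) (c^2))"
  using ms
proof (induction ms rule: wab.induct)
  case 1 then show ?case by simp
next
  case (2 m)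
  obtain \<tau> where \<tau>: "\<tau>^2 = 1" "lam p q r (mpow f m) = 0" "\<forall>Y. lam p q r (Y ** mpow f m) = \<tau> * lam p q r Y"
    using mpow_lam[OF assms(1,2) f, of m] by blast
  show ?case using \<tau> c by (intro exI[of _ \<tau>]) simp
next
  case (3 m v va)
  obtain \<sigma> where \<sigma>: "\<sigma>^2 = 1" "case wab (v # va) of (A, B, s) \<Rightarrow>
     lam p q r (word_eval (v # va) f \<phi>) = \<sigma> * (if s then c else 1) * poly (map_poly of_int A) (c^2) \<and>
     lam p q r (\<phi> ** word_eval (v # va) f \<phi>) = \<sigma> * (if s then 1 else c) * poly (map_poly of_int B) (c^2)"
    using 3 by auto
  obtain \<tau> where \<tau>: "\<tau>^2 = 1" "\<forall>X. lam p q r (mpow f m ** X) = \<tau> * lam p q r X"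
     "\<forall>Y X. lam p q r (Y ** (mpow f m ** X)) = \<tau> * (lam p q r (Y ** X) + of_int m * lam p q r Y * lam p q r X)"
    using mpow_lam[OF assms(1,2) f, of m] by blast
  define W where "W = word_eval (v # va) f \<phi>"
  have we: "word_eval (m # v # va) f \<phi> = mpow f m ** (\<phi> ** W)"
    by (simp add: W_def matrix_mul_assoc)
  have l1: "lam p q r (word_eval (m # v # va) f \<phi>) = \<tau> * lam p q r (\<phi> ** W)"
    using \<tau> we by simp
  have l2: "lam p q r (\<phi> ** word_eval (m # v # va) f \<phi>) = \<tau> * (- lam p q r W + of_int m * c * lam p q r (\<phi> ** W))"
    using \<tau> we L3[OF ph] c by simp
  obtain A B s where wv: "wab (v # va) = (A, B, s)" by (cases "wab (v # va)")
  have s2: "(\<tau>*\<sigma>)^2 = 1" using \<tau>(1) \<sigma>(1) by (simp add: power_mult_distrib)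
  show ?case
  proof (cases s)
    case True
    then have h: "lam p q r W = \<sigma> * c * poly (map_poly of_int A) (c^2)"
       "lam p q r (\<phi> ** W) = \<sigma> * poly (map_poly of_int B) (c^2)"
      using \<sigma>(2) wv W_def by auto
    show ?thesis using True wv s2 l1 l2 h
      by (intro exI[of _ "\<tau>*\<sigma>"]) (simp add: algebra_simps)
  next
    case False
    then have h: "lam p q r W = \<sigma> * poly (map_poly of_int A) (c^2)"
       "lam p q r (\<phi> ** W) = \<sigma> * c * poly (map_poly of_int B) (c^2)"
      using \<sigma>(2) wv W_def by auto
    show ?thesis using False wv s2 l1 l2 h
      by (intro exI[of _ "\<tau>*\<sigma>"]) (simp add: algebra_simps power2_eq_square)
  qed
qed

lemma inv_det1: fixes X :: cmat assumes "det X = 1"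
  shows "X ** matrix_inv X = mat 1" "matrix_inv X ** X = mat 1" "det (matrix_inv X) = 1"
proof -
  obtain a b c d where X: "X = mat2 a b c d" by (rule obtain_mat2)
  have d: "a*d - b*c = 1" using assms X by simp
  show "X ** matrix_inv X = mat 1" "matrix_inv X ** X = mat 1" "det (matrix_inv X) = 1"
    unfolding X mat2_inv[OF d] using d by (simp_all add: mat2_one algebra_simps)
qed

lemma inv_eq: assumes "(X::cmat) ** Y = mat 1" shows "matrix_inv X = Y"
proof -
  have YX: "Y ** X = mat 1" using assms matrix_left_right_inverse by blast
  show ?thesis unfolding matrix_inv_def
  proof (rule some_equality)
    fix Z assume Z: "X ** Z = mat 1 \<and> Z ** X = mat 1"
    have "Z = (Y ** X) ** Z" by (simp only: YX matrix_mul_lid)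
    also have "\<dots> = Y" using Z by (simp only: matrix_mul_assoc[symmetric] matrix_mul_rid)
    finally show "Z = Y" .
  qed (use assms YX in auto)
qed

lemma inv_mult: fixes X Y :: cmat assumes "det X = 1" "det Y = 1"
  shows "matrix_inv (X ** Y) = matrix_inv Y ** matrix_inv X"
proof (rule inv_eq)
  have "X ** Y ** (matrix_inv Y ** matrix_inv X) = X ** (Y ** matrix_inv Y) ** matrix_inv X"
    by (simp add: matrix_mul_assoc)
  then show "X ** Y ** (matrix_inv Y ** matrix_inv X) = mat 1"
    using inv_det1[OF assms(1)] inv_det1[OF assms(2)] by simp
qed

lemma inv_inv: fixes X :: cmat assumes "det X = 1" shows "matrix_inv (matrix_inv X) = X"
  using inv_eq[OF inv_det1(2)[OF assms]] .

lemma det_funpow: fixes g :: cmat assumes "det g = 1" shows "det (((\<lambda>x. g ** x)^^n) (mat 1)) = 1"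
  by (induction n) (simp_all add: det_mul assms det_I)

lemma det_mpow: fixes f :: cmat assumes "det f = 1" shows "det (mpow f m) = 1"
  unfolding mpow_def using det_funpow[OF assms] det_funpow[OF inv_det1(3)[OF assms]] by simp

lemma det_word: assumes "det f = 1" "det \<phi> = 1" shows "det (word_eval ms f \<phi>) = 1"
  using assms
  by (induction ms f \<phi> rule: word_eval.induct) (simp_all add: det_mul det_mpow det_I)

lemma gamma_word: assumes "det f = 1" "(trace f)^2 = 4" "det \<phi> = 1" "trace \<phi> = 0" "ms \<noteq> []"
  shows "gamma f (word_eval ms f \<phi>) = poly (map_poly of_int (Pw ms)) (gamma f \<phi>)"
proof -
  obtain \<epsilon> p q r where e: "\<epsilon>^2 = 1" "p^2 + q*r = 0" and f: "f = mat2 (\<epsilon>*(1+p)) (\<epsilon>*q) (\<epsilon>*r) (\<epsilon>*(1-p))"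
    using para_form[OF assms(1,2)] by blast
  define c where "c = lam p q r \<phi>"
  have gphi: "gamma f \<phi> = c^2" using gamma_lam[OF e f assms(3)] c_def by simp
  have gw: "gamma f (word_eval ms f \<phi>) = (lam p q r (word_eval ms f \<phi>))^2"
    using gamma_lam[OF e f det_word[OF assms(1,3)]] .
  obtain A B s where w: "wab ms = (A, B, s)" by (cases "wab ms")
  have lw: "\<exists>\<sigma>::complex. \<sigma>^2 = 1 \<and> lam p q r (word_eval ms f \<phi>) = \<sigma> * (if s then c else 1) * poly (map_poly of_int A) (c^2)"
    using lam_word[OF e f assms(4,3,5) c_def] unfolding w by auto
  then obtain \<sigma> :: complex where \<sigma>: "\<sigma>^2 = 1" "lam p q r (word_eval ms f \<phi>) = \<sigma> * (if s then c else 1) * poly (map_poly of_int A) (c^2)"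
    by blast
  show ?thesis
  proof (cases s)
    case True
    then have "lam p q r (word_eval ms f \<phi>) = \<sigma> * c * poly (map_poly of_int A) (c^2)"
      using \<sigma>(2) by simp
    then have "(lam p q r (word_eval ms f \<phi>))^2 = \<sigma>^2 * (c^2 * (poly (map_poly of_int A) (c^2))^2)"
      by (simp add: power_mult_distrib)
    then show ?thesis unfolding gw gphi Pw_def using w True \<sigma>(1) by simp
  next
    case False
    then have "lam p q r (word_eval ms f \<phi>) = \<sigma> * poly (map_poly of_int A) (c^2)"
      using \<sigma>(2) by simp
    then have "(lam p q r (word_eval ms f \<phi>))^2 = \<sigma>^2 * (poly (map_poly of_int A) (c^2))^2"
      by (simp add: power_mult_distrib)
    then show ?thesis unfolding gw gphi Pw_def using w False \<sigma>(1) by simp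
  qed
qed

lemma ell_trace: assumes "elliptic_order_two \<phi>" shows "det \<phi> = 1" "trace \<phi> = 0"
proof -
  obtain a b c d where X: "\<phi> = mat2 a b c d" by (rule obtain_mat2)
  have d: "a*d - b*c = 1" using assms X by (simp add: elliptic_order_two_def)
  have ne: "\<phi> \<noteq> mat 1" "\<phi> \<noteq> - mat 1" using assms by (auto simp: elliptic_order_two_def)
  have sq: "\<phi> ** \<phi> = mat 1 \<or> \<phi> ** \<phi> = - mat 1" using assms by (simp add: elliptic_order_two_def)
  show "det \<phi> = 1" using assms by (simp add: elliptic_order_two_def)
  show "trace \<phi> = 0"
  proof (cases "\<phi> ** \<phi> = mat 1")
    case True
    then have e: "a*a + b*c = 1" "a*b + b*d = 0" "c*a + d*c = 0" "c*b + d*d = 1"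
      unfolding X mat2_one mat2_mult mat2_eq_iff by auto
    have "(a+d)^2 = 4" using e d by algebra
    then have "a + d \<noteq> 0" by auto
    have "b*(a+d) = 0" "c*(a+d) = 0" using e by algebra+
    then have b0: "b = 0" and c0: "c = 0" using \<open>a + d \<noteq> 0\<close> by auto
    then have aa: "a^2 = 1" and "d*d = 1" "a*d = 1" using e d by (auto simp: power2_eq_square)
    then have ad: "d = a" by algebra
    have "a = 1 \<or> a = -1" using aa by (simp add: power2_eq_1_iff)
    then have "\<phi> = mat 1 \<or> \<phi> = - mat 1" unfolding X mat2_one mat2_neg b0 c0 ad by auto
    then show ?thesis using ne by blast
  next
    case False
    then have "\<phi> ** \<phi> = - mat 1" using sq by blast
    then have e: "a*a + b*c = -1" "a*b + b*d = 0" "c*a + d*c = 0" "c*b + d*d = -1"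
      unfolding X mat2_one mat2_mult mat2_eq_iff mat2_neg by auto
    have "(a+d)^2 = 0" using e d by algebra
    then show ?thesis unfolding X by simp
  qed
qed

lemma realize: "\<exists>f \<phi>. parabolic f \<and> elliptic_order_two \<phi> \<and> gamma f \<phi> = z"
proof -
  define f where "f = mat2 1 1 0 1"
  have f': "f = mat2 (1*(1+0)) (1*1) (1*0) (1*(1-0))" unfolding f_def by simp
  have pf: "parabolic f" unfolding parabolic_def f_def mat2_one mat2_neg by (simp add: mat2_eq_iff)
  show ?thesis
  proof (cases "z = 0")
    case True
    define \<phi> where "\<phi> = mat2 \<i> 0 0 (-\<i>)"
    have "elliptic_order_two \<phi>" unfolding elliptic_order_two_def \<phi>_def mat2_one mat2_neg
      by (simp add: mat2_eq_iff)
    moreover have "gamma f \<phi> = 0" using gamma_lam[of 1 0 1 0 f \<phi>] f' by (simp add: \<phi>_def)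
    ultimately show ?thesis using pf True by blast
  next
    case False
    define c where "c = csqrt z"
    have c2: "c^2 = z" unfolding c_def by simp
    then have c0: "c \<noteq> 0" using False by auto
    define \<phi> where "\<phi> = mat2 0 (-1/c) c 0"
    have "elliptic_order_two \<phi>" unfolding elliptic_order_two_def \<phi>_def mat2_one mat2_neg
      using c0 by (simp add: mat2_eq_iff)
    moreover have "gamma f \<phi> = z" using gamma_lam[of 1 0 1 0 f \<phi>] f' c0 c2 by (simp add: \<phi>_def)
    ultimately show ?thesis using pf by blast
  qed
qed

lemma parabolic_tr: "parabolic f \<Longrightarrow> det f = 1 \<and> (trace f)^2 = 4"
  by (simp add: parabolic_def)

lemma word_poly_eq: assumes "ms \<noteq> []" shows "word_poly ms = Pw ms"
  unfolding word_poly_def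
proof (rule the_equality)
  show "\<forall>f \<phi>. parabolic f \<and> elliptic_order_two \<phi> \<longrightarrow>
       gamma f (word_eval ms f \<phi>) = poly (map_poly of_int (Pw ms)) (gamma f \<phi>)"
    using gamma_word assms parabolic_tr ell_trace by blast
next
  fix P assume P: "\<forall>f \<phi>. parabolic f \<and> elliptic_order_two \<phi> \<longrightarrow>
       gamma f (word_eval ms f \<phi>) = poly (map_poly of_int P) (gamma f \<phi>)"
  have "poly (map_poly (of_int::int\<Rightarrow>complex) P) z = poly (map_poly of_int (Pw ms)) z" for z
  proof -
    obtain f \<phi> where h: "parabolic f" "elliptic_order_two \<phi>" "gamma f \<phi> = z" using realize by blast
    show ?thesis using P h gamma_word[OF _ _ _ _ assms] parabolic_tr[OF h(1)] ell_trace[OF h(2)] by metis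
  qed
  then have "map_poly (of_int::int\<Rightarrow>complex) P = map_poly of_int (Pw ms)"
    using poly_eq_poly_eq_iff by blast
  then show "P = Pw ms" by (rule mpi_inj)
qed



lemma mat2_diff [simp]: "mat2 a b c d - mat2 a' b' c' d' = mat2 (a-a') (b-b') (c-c') (d-d')"
  by (simp add: vec_eq_iff forall_2)

lemma mult_diff: "(X::cmat) ** ((Y::cmat) - (Z::cmat)) = X ** Y - X ** Z"
  by (cases X rule: obtain_mat2, cases Y rule: obtain_mat2, cases Z rule: obtain_mat2) (simp add: algebra_simps)

lemma gg_props: assumes "\<forall>s\<in>S. det s = 1" "g \<in> gen_group S"
  shows "det g = 1 \<and> matrix_inv g \<in> gen_group S"
  using assms(2)
proof (induction rule: gen_group.induct)
  case one
  have "matrix_inv (mat 1 :: cmat) = mat 1" by (rule inv_eq) simp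
  then show ?case by (simp add: det_I gen_group.one)
next
  case (gen s)
  then show ?case using assms(1) by (simp add: gen_group.inv)
next
  case (inv s)
  then show ?case using assms(1) inv_det1(3) inv_inv by (simp add: gen_group.gen)
next
  case (mult g h)
  then show ?case by (simp add: det_mul inv_mult gen_group.mult)
qed

lemma gg_mono: assumes "\<forall>s\<in>T. det s = 1" "S \<subseteq> gen_group T"
  shows "gen_group S \<subseteq> gen_group T"
proof
  fix g assume "g \<in> gen_group S"
  then show "g \<in> gen_group T"
  proof (induction rule: gen_group.induct)
    case one then show ?case by (rule gen_group.one)
  next
    case (gen s) then show ?case using assms(2) by blast
  next
    case (inv s) then show ?case using assms gg_props by blast
  next
    case (mult g h) then show ?case by (blast intro: gen_group.mult)
  qed
qed

lemma funpow_in: assumes "g \<in> gen_group S" shows "((\<lambda>x. g ** x)^^n) (mat 1) \<in> gen_group S"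
  by (induction n) (simp_all add: gen_group.one gen_group.mult assms)

lemma mpow_in: assumes "f \<in> gen_group S" "matrix_inv f \<in> gen_group S" shows "mpow f m \<in> gen_group S"
  unfolding mpow_def using funpow_in assms by simp

lemma word_in: assumes "f \<in> gen_group S" "matrix_inv f \<in> gen_group S" "\<phi> \<in> gen_group S"
  shows "word_eval ms f \<phi> \<in> gen_group S"
  using assms
  by (induction ms f \<phi> rule: word_eval.induct) (simp_all add: gen_group.one gen_group.mult mpow_in)

lemma disc_mono: "H \<subseteq> G \<Longrightarrow> discrete_PSL G \<Longrightarrow> discrete_PSL H"
  unfolding discrete_PSL_def by (meson subsetD)

lemma norm_vec2_le: "norm (x::'a::real_normed_vector^2) \<le> norm (x$1) + norm (x$2)"
proof -
  have "norm x \<le> (\<Sum>i\<in>UNIV. norm (x$i))" unfolding norm_vec_def by (rule L2_set_le_sum) simp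
  then show ?thesis by (simp add: sum_2)
qed

lemma norm_cmat_le: "norm (M::cmat) \<le> norm (M$1$1) + norm (M$1$2) + norm (M$2$1) + norm (M$2$2)"
  using norm_vec2_le[of M] norm_vec2_le[of "M$1"] norm_vec2_le[of "M$2"] by linarith

lemma entry_le: "norm ((M::cmat)$i$j) \<le> norm M"
  using Finite_Cartesian_Product.norm_nth_le[of "M$i" j] Finite_Cartesian_Product.norm_nth_le[of M i] by linarith

lemma norm_mult_le: "norm ((X::cmat) ** (Y::cmat)) \<le> 8 * norm X * norm Y"
proof -
  have e: "norm ((X ** Y)$i$j) \<le> 2 * (norm X * norm Y)" for i j
  proof -
    have "(X ** Y)$i$j = X$i$1 * Y$1$j + X$i$2 * Y$2$j"
      by (simp add: matrix_matrix_mult_def sum_2)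
    also have "norm \<dots> \<le> norm (X$i$1) * norm (Y$1$j) + norm (X$i$2) * norm (Y$2$j)"
      by (rule order_trans[OF norm_triangle_ineq]) (simp add: norm_mult)
    also have "\<dots> \<le> norm X * norm Y + norm X * norm Y"
      using entry_le[of X i 1] entry_le[of X i 2] entry_le[of Y 1 j] entry_le[of Y 2 j]
      by (intro add_mono mult_mono) auto
    finally show ?thesis by simp
  qed
  show ?thesis using norm_cmat_le[of "X ** Y"] e[of 1 1] e[of 1 2] e[of 2 1] e[of 2 2] by linarith
qed

lemma norm_inv_le: assumes "det (X::cmat) = 1" shows "norm (matrix_inv X) \<le> 4 * norm X"
proof -
  obtain a b c d where X: "X = mat2 a b c d" by (rule obtain_mat2)
  have d: "a*d - b*c = 1" using assms X by simp
  have iX: "matrix_inv X = mat2 d (-b) (-c) a" unfolding X by (rule mat2_inv[OF d])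
  have "norm (matrix_inv X) \<le> norm (X$2$2) + norm (X$1$2) + norm (X$2$1) + norm (X$1$1)"
    using norm_cmat_le[of "matrix_inv X"] unfolding iX unfolding X by simp
  also have "\<dots> \<le> 4 * norm X"
    using entry_le[of X 1 1] entry_le[of X 1 2] entry_le[of X 2 1] entry_le[of X 2 2] by linarith
  finally show ?thesis .
qed

lemma lf_discrete:
  assumes "\<And>g. g \<in> G \<Longrightarrow> \<exists>e>0. finite {x\<in>G. dist x g < e \<or> dist x (-g) < e}"
  shows "discrete_PSL G"
  unfolding discrete_PSL_def
proof
  fix g assume g: "g \<in> G"
  obtain e where e: "e > 0" and fin: "finite {x\<in>G. dist x g < e \<or> dist x (-g) < e}"
    using assms[OF g] by blast
  obtain d1 where d1: "d1 > 0" "\<forall>x\<in>{x\<in>G. dist x g < e \<or> dist x (-g) < e}. x \<noteq> g \<longrightarrow> d1 \<le> dist g x"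
    using finite_set_avoid[OF fin, of g] by blast
  obtain d2 where d2: "d2 > 0" "\<forall>x\<in>{x\<in>G. dist x g < e \<or> dist x (-g) < e}. x \<noteq> -g \<longrightarrow> d2 \<le> dist (-g) x"
    using finite_set_avoid[OF fin, of "-g"] by blast
  show "\<exists>e>0. \<forall>h\<in>G. dist h g < e \<or> dist h (- g) < e \<longrightarrow> h = g \<or> h = - g"
  proof (intro exI[of _ "min e (min d1 d2)"] conjI ballI impI)
    show "0 < min e (min d1 d2)" using e d1 d2 by simp
  next
    fix h assume h: "h \<in> G" and hd: "dist h g < min e (min d1 d2) \<or> dist h (- g) < min e (min d1 d2)"
    then have hT: "h \<in> {x\<in>G. dist x g < e \<or> dist x (-g) < e}" by auto
    show "h = g \<or> h = - g"
    proof (rule ccontr)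
      assume "\<not> (h = g \<or> h = - g)"
      then have "d1 \<le> dist g h" "d2 \<le> dist (-g) h" using d1(2) d2(2) hT by auto
      then show False using hd by (simp add: dist_commute)
    qed
  qed
qed

lemma pm_finite: assumes "\<forall>h1\<in>S. \<forall>h2\<in>S. h2 = h1 \<or> h2 = - (h1::cmat)" shows "finite S"
proof (cases "S = {}")
  case False
  then obtain h0 where "h0 \<in> S" by blast
  then have "S \<subseteq> {h0, -h0}" using assms by blast
  then show ?thesis by (rule finite_subset) simp
qed simp

lemma coset_sep:
  assumes disc: "discrete_PSL H" and one: "mat 1 \<in> H"
    and cl: "\<forall>h1\<in>H. \<forall>h2\<in>H. matrix_inv h1 ** h2 \<in> H"
    and dets: "\<forall>h\<in>H. det h = 1" and y: "det y = 1"
  shows "\<exists>e>0. \<forall>h1\<in>H. \<forall>h2\<in>H. dist (y ** h1) z < e \<longrightarrow> dist (y ** h2) z < e \<longrightarrow> h2 = h1 \<or> h2 = - h1"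
proof -
  obtain e0 where e0: "e0 > 0" "\<forall>h\<in>H. dist h (mat 1) < e0 \<longrightarrow> h = mat 1 \<or> h = - mat 1"
    using disc one unfolding discrete_PSL_def by blast
  define e where "e = min 1 (e0 / (64 * (norm z + 1)))"
  have nz: "norm z + 1 > 0" by (simp add: add_nonneg_pos)
  have epos: "e > 0" unfolding e_def using e0 nz by simp
  have e1: "e \<le> 1" unfolding e_def by simp
  have "e \<le> e0 / (64 * (norm z + 1))" unfolding e_def by simp
  then have e2: "64 * (norm z + 1) * e \<le> e0" using nz by (simp add: pos_le_divide_eq mult.commute)
  show ?thesis
  proof (intro exI[of _ e] conjI ballI impI)
    show "e > 0" by (rule epos)
  next
    fix h1 h2 assume h1: "h1 \<in> H" and h2: "h2 \<in> H" and d1: "dist (y ** h1) z < e" and d2: "dist (y ** h2) z < e"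
    define u where "u = y ** h1"
    define v where "v = y ** h2"
    have du: "det u = 1" unfolding u_def using y dets h1 by (simp add: det_mul)
    have k: "matrix_inv h1 ** h2 = matrix_inv u ** v"
    proof -
      have "matrix_inv u ** v = matrix_inv h1 ** (matrix_inv y ** y) ** h2"
        unfolding u_def v_def using inv_mult[OF y] dets h1 by (simp add: matrix_mul_assoc)
      then show ?thesis using inv_det1(2)[OF y] by simp
    qed
    have km: "matrix_inv h1 ** h2 - mat 1 = matrix_inv u ** (v - u)"
      unfolding k mult_diff using inv_det1(2)[OF du] by simp
    have "norm u \<le> norm z + norm (u - z)" by (rule norm_triangle_sub)
    then have nu: "norm u \<le> norm z + 1"
      using d1 e1 unfolding u_def dist_norm by linarith
    have "v - u = (v - z) - (u - z)" by simp
    then have "norm (v - u) \<le> norm (v - z) + norm (u - z)" using norm_triangle_ineq4 by metis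
    then have nvu: "norm (v - u) < 2 * e"
      using d1 d2 unfolding u_def v_def dist_norm by linarith
    have "norm (matrix_inv h1 ** h2 - mat 1) \<le> 8 * norm (matrix_inv u) * norm (v - u)"
      unfolding km by (rule norm_mult_le)
    also have "\<dots> \<le> 8 * (4 * norm u) * norm (v - u)"
      using norm_inv_le[OF du] by (simp add: mult_right_mono)
    also have "\<dots> \<le> 32 * (norm z + 1) * norm (v - u)"
      using nu by (simp add: mult_right_mono)
    also have "\<dots> < 32 * (norm z + 1) * (2 * e)"
      using nvu nz by simp
    also have "\<dots> \<le> e0" using e2 by (simp add: algebra_simps)
    finally have "dist (matrix_inv h1 ** h2) (mat 1) < e0" by (simp add: dist_norm)
    moreover have "matrix_inv h1 ** h2 \<in> H" using cl h1 h2 by blast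
    ultimately have "matrix_inv h1 ** h2 = mat 1 \<or> matrix_inv h1 ** h2 = - mat 1" using e0 by blast
    moreover have "h1 ** (matrix_inv h1 ** h2) = h2"
      using inv_det1(1)[of h1] dets h1 by (simp add: matrix_mul_assoc)
    ultimately show "h2 = h1 \<or> h2 = - h1"
    proof (elim disjE)
      assume "matrix_inv h1 ** h2 = mat 1" "h1 ** (matrix_inv h1 ** h2) = h2"
      then show ?thesis by simp
    next
      assume "matrix_inv h1 ** h2 = - mat 1" "h1 ** (matrix_inv h1 ** h2) = h2"
      then have "h2 = h1 ** (- mat 1)" by simp
      also have "\<dots> = - h1" by (simp only: neg_mult_right matrix_mul_rid)
      finally show ?thesis by simp
    qed
  qed
qed

lemma ext_disc:
  assumes disc: "discrete_PSL H" and one: "mat 1 \<in> H"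
    and cl: "\<forall>h1\<in>H. \<forall>h2\<in>H. matrix_inv h1 ** h2 \<in> H"
    and dets: "\<forall>h\<in>H. det h = 1" and y: "det \<psi> = 1"
    and G: "G \<subseteq> {x. \<exists>h\<in>H. x = h \<or> x = \<psi> ** h}"
  shows "discrete_PSL G"
proof (rule lf_discrete)
  fix g assume g: "g \<in> G"
  have dI: "det (mat 1 :: cmat) = 1" by (simp add: det_I)
  obtain e1 where e1: "e1 > 0" "\<forall>h1\<in>H. \<forall>h2\<in>H. dist (mat 1 ** h1) g < e1 \<longrightarrow> dist (mat 1 ** h2) g < e1 \<longrightarrow> h2 = h1 \<or> h2 = - h1"
    using coset_sep[OF disc one cl dets dI] by blast
  obtain e2 where e2: "e2 > 0" "\<forall>h1\<in>H. \<forall>h2\<in>H. dist (mat 1 ** h1) (-g) < e2 \<longrightarrow> dist (mat 1 ** h2) (-g) < e2 \<longrightarrow> h2 = h1 \<or> h2 = - h1"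
    using coset_sep[OF disc one cl dets dI] by blast
  obtain e3 where e3: "e3 > 0" "\<forall>h1\<in>H. \<forall>h2\<in>H. dist (\<psi> ** h1) g < e3 \<longrightarrow> dist (\<psi> ** h2) g < e3 \<longrightarrow> h2 = h1 \<or> h2 = - h1"
    using coset_sep[OF disc one cl dets y] by blast
  obtain e4 where e4: "e4 > 0" "\<forall>h1\<in>H. \<forall>h2\<in>H. dist (\<psi> ** h1) (-g) < e4 \<longrightarrow> dist (\<psi> ** h2) (-g) < e4 \<longrightarrow> h2 = h1 \<or> h2 = - h1"
    using coset_sep[OF disc one cl dets y] by blast
  define e where "e = min (min e1 e2) (min e3 e4)"
  have epos: "e > 0" unfolding e_def using e1 e2 e3 e4 by simp
  define S where "S = (\<lambda>(y::cmat) (z::cmat). {h\<in>H. dist (y ** h) z < e})"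
  have f1: "finite (S (mat 1) g)" unfolding S_def
    by (rule pm_finite) (use e1 in \<open>auto simp: e_def\<close>)
  have f2: "finite (S (mat 1) (-g))" unfolding S_def
    by (rule pm_finite) (use e2 in \<open>auto simp: e_def\<close>)
  have f3: "finite (S \<psi> g)" unfolding S_def
    by (rule pm_finite) (use e3 in \<open>auto simp: e_def\<close>)
  have f4: "finite (S \<psi> (-g))" unfolding S_def
    by (rule pm_finite) (use e4 in \<open>auto simp: e_def\<close>)
  have sub: "{x\<in>G. dist x g < e \<or> dist x (-g) < e} \<subseteq>
     (\<lambda>h. mat 1 ** h) ` (S (mat 1) g \<union> S (mat 1) (-g)) \<union> (\<lambda>h. \<psi> ** h) ` (S \<psi> g \<union> S \<psi> (-g))"
  proof
    fix x assume x: "x \<in> {x\<in>G. dist x g < e \<or> dist x (-g) < e}"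
    then obtain h where h: "h \<in> H" "x = h \<or> x = \<psi> ** h" using G by blast
    show "x \<in> (\<lambda>h. mat 1 ** h) ` (S (mat 1) g \<union> S (mat 1) (-g)) \<union> (\<lambda>h. \<psi> ** h) ` (S \<psi> g \<union> S \<psi> (-g))"
      using h(2)
    proof
      assume "x = h" then show ?thesis using x h(1) unfolding S_def by auto
    next
      assume "x = \<psi> ** h" then show ?thesis using x h(1) unfolding S_def by auto
    qed
  qed
  have "finite {x\<in>G. dist x g < e \<or> dist x (-g) < e}"
    by (rule finite_subset[OF sub]) (use f1 f2 f3 f4 in simp)
  then show "\<exists>e>0. finite {x\<in>G. dist x g < e \<or> dist x (-g) < e}" using epos by blast
qed

lemma sq_neg: assumes "trace (X::cmat) = 0" "det X = 1" shows "X ** X = - mat 1"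
proof -
  obtain a b c d where X: "X = mat2 a b c d" by (rule obtain_mat2)
  have "a + d = 0" "a*d - b*c = 1" using assms X by simp_all
  then show ?thesis unfolding X mat2_one mat2_mult mat2_neg mat2_eq_iff by algebra
qed

lemma trace_WU: "trace (W ** Um p q r t) = trace W + t * lam p q r W"
  by (cases W rule: obtain_mat2) (simp add: Um_def algebra_simps)

lemma det_U: assumes "p^2 + q*r = 0" shows "det (Um p q r t) = 1"
  using assms unfolding Um_def by simp algebra

lemma comm_AU: "mat2 (\<epsilon>*(1+p)) (\<epsilon>*q) (\<epsilon>*r) (\<epsilon>*(1-p)) ** Um p q r t = Um p q r t ** mat2 (\<epsilon>*(1+p)) (\<epsilon>*q) (\<epsilon>*r) (\<epsilon>*(1-p))"
  unfolding Um_def mat2_mult mat2_eq_iff by algebra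

lemma finite_disc: assumes "finite F" "G \<subseteq> F" shows "discrete_PSL G"
proof (rule lf_discrete)
  fix g assume "g \<in> G"
  have "finite {x\<in>G. dist x g < 1 \<or> dist x (-g) < 1}"
    using assms by (rule_tac finite_subset[of _ F]) auto
  then show "\<exists>e>0. finite {x\<in>G. dist x g < e \<or> dist x (-g) < e}" by (intro exI[of _ 1]) simp
qed

lemma zero_case: "\<exists>A' B' :: cmat. det A' = 1 \<and> det B' = 1 \<and> principal_char A' B' = (0, 0, -4) \<and> discrete_rep A' B'"
proof -
  define J where "J = mat2 \<i> 0 0 (-\<i>)"
  define F where "F = {mat2 1 0 0 1, mat2 (-1) 0 0 (-1), mat2 \<i> 0 0 (-\<i>), mat2 (-\<i>) 0 0 \<i>}"
  have d1: "1 * 1 - 0 * 0 = (1::complex)" by simp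
  have dJ: "\<i> * (-\<i>) - 0 * 0 = (1::complex)" by simp
  have sub: "gen_group {mat 1, J} \<subseteq> F"
  proof
    fix g assume "g \<in> gen_group {mat 1, J}"
    then show "g \<in> F"
    proof (induction rule: gen_group.induct)
      case one then show ?case by (simp add: F_def mat2_one)
    next
      case (gen s) then show ?case by (auto simp: F_def mat2_one J_def)
    next
      case (inv s) then show ?case
        by (auto simp: F_def mat2_one J_def mat2_inv[OF d1] mat2_inv[OF dJ])
    next
      case (mult g h) then show ?case by (auto simp: F_def mat2_eq_iff)
    qed
  qed
  have "gamma (mat 1) J = 0"
    unfolding gamma_def commutator_def mat2_one J_def mat2_inv[OF d1] mat2_inv[OF dJ] by simp
  moreover have "trace (mat 1 :: cmat) = 2" by (simp add: mat2_one)
  moreover have "trace J = 0" "det J = 1" by (simp_all add: J_def)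
  moreover have "discrete_rep (mat 1) J" unfolding discrete_rep_def
    by (rule finite_disc[OF _ sub]) (simp add: F_def)
  ultimately show ?thesis unfolding principal_char_def
    by (intro exI[of _ "mat 1"] exI[of _ J]) (simp add: det_I)
qed

lemma rinv: assumes "det (s::cmat) = 1" shows "X ** s ** matrix_inv s = X"
  using inv_det1(1)[OF assms] by (simp add: matrix_mul_assoc[symmetric])

lemma conj_disc:
  assumes dA: "det A = 1" and dB: "det B = 1" and tB: "trace B = 0"
    and dW: "det W = 1" and Win: "W \<in> gen_group {A, B}"
    and dpsi: "det \<psi> = 1" and tpsi: "trace \<psi> = 0"
    and cj: "\<psi> ** A ** matrix_inv \<psi> = W ** A ** matrix_inv W"
    and disc: "discrete_rep A B"
  shows "discrete_rep A \<psi>"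
proof -
  have dets0: "\<forall>s\<in>{A, B}. det s = 1" using dA dB by simp
  define C where "C = W ** A ** matrix_inv W"
  have pp: "\<psi> ** \<psi> = - mat 1" by (rule sq_neg[OF tpsi dpsi])
  have pp2: "X ** \<psi> ** \<psi> = - X" for X :: cmat
    by (simp add: matrix_mul_assoc[symmetric] pp neg_mult_right)
  have ipsi: "matrix_inv \<psi> = - \<psi>"
    by (rule inv_eq) (simp add: neg_mult_right pp)
  have Cpsi: "\<psi> ** A ** \<psi> = - C"
  proof -
    have "- (\<psi> ** A ** \<psi>) = C" using cj unfolding ipsi C_def by (simp add: neg_mult_right)
    then show ?thesis by (metis minus_minus)
  qed
  have dC: "det C = 1" unfolding C_def using dW dA inv_det1(3)[OF dW] by (simp add: det_mul)
  have dmI: "det (- mat 1 :: cmat) = 1" by (simp add: mat2_one)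
  define H where "H = gen_group {A, C, - mat 1}"
  have detsH0: "\<forall>s\<in>{A, C, - mat 1}. det s = 1" using dA dC dmI by simp
  have sub0: "{A, C, - mat 1} \<subseteq> gen_group {A, B}"
  proof -
    have A0: "A \<in> gen_group {A, B}" by (simp add: gen_group.gen)
    have "matrix_inv W \<in> gen_group {A, B}" using gg_props[OF dets0 Win] by simp
    then have "C \<in> gen_group {A, B}" unfolding C_def using A0 Win by (simp add: gen_group.mult)
    moreover have "- mat 1 \<in> gen_group {A, B}"
      using sq_neg[OF tB dB] gen_group.mult[of B "{A, B}" B] by (simp add: gen_group.gen)
    ultimately show ?thesis using A0 by simp
  qed
  have HG: "H \<subseteq> gen_group {A, B}" unfolding H_def by (rule gg_mono[OF dets0 sub0])
  have discH: "discrete_PSL H" using disc HG disc_mono unfolding discrete_rep_def by blast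
  have oneH: "mat 1 \<in> H" unfolding H_def by (rule gen_group.one)
  have detsH: "\<forall>h\<in>H. det h = 1" using gg_props[OF detsH0] unfolding H_def by blast
  have invH: "\<And>h. h \<in> H \<Longrightarrow> matrix_inv h \<in> H" using gg_props[OF detsH0] unfolding H_def by blast
  have multH: "\<And>g h. g \<in> H \<Longrightarrow> h \<in> H \<Longrightarrow> g ** h \<in> H" unfolding H_def by (rule gen_group.mult)
  have clH: "\<forall>h1\<in>H. \<forall>h2\<in>H. matrix_inv h1 ** h2 \<in> H" using invH multH by blast
  have mIH: "- mat 1 \<in> H" unfolding H_def by (simp add: gen_group.gen)
  have AH: "A \<in> H" unfolding H_def by (simp add: gen_group.gen)
  have CH: "C \<in> H" unfolding H_def by (simp add: gen_group.gen)
  have negH: "\<And>h. h \<in> H \<Longrightarrow> - h \<in> H"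
  proof -
    fix h assume "h \<in> H"
    then have "(- mat 1) ** h \<in> H" using multH mIH by blast
    then show "- h \<in> H" by (simp add: neg_mult_left)
  qed
  have genconj: "\<psi> ** s ** \<psi> \<in> H" if "s \<in> {A, C, - mat 1}" for s
  proof -
    have "s = A \<or> s = C \<or> s = - mat 1" using that by simp
    then show ?thesis
    proof (elim disjE)
      assume "s = A" then show ?thesis using Cpsi negH CH by simp
    next
      assume "s = C"
      then have "\<psi> ** s ** \<psi> = - (\<psi> ** (\<psi> ** A ** \<psi>) ** \<psi>)"
        using Cpsi by (simp add: neg_mult_left neg_mult_right)
      also have "\<dots> = - A" by (simp add: matrix_mul_assoc pp2 pp neg_mult_left)
      finally show ?thesis using negH AH by simp
    next
      assume "s = - mat 1"
      then show ?thesis using oneH by (simp add: neg_mult_left neg_mult_right pp)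
    qed
  qed
  have conj: "\<psi> ** h ** \<psi> \<in> H" if "h \<in> H" for h
    using that unfolding H_def
  proof (induction rule: gen_group.induct)
    case one then show ?case using mIH by (simp add: pp H_def)
  next
    case (gen s) then show ?case using genconj by (simp add: H_def)
  next
    case (inv s)
    have ds: "det s = 1" using inv detsH0 by blast
    have "matrix_inv (\<psi> ** s ** \<psi>) = \<psi> ** matrix_inv s ** \<psi>"
    proof (rule inv_eq)
      have "\<psi> ** s ** \<psi> ** (\<psi> ** matrix_inv s ** \<psi>) = - (\<psi> ** s ** matrix_inv s ** \<psi>)"
        by (simp add: matrix_mul_assoc pp2 neg_mult_left)
      also have "\<dots> = - (\<psi> ** \<psi>)" by (simp only: rinv[OF ds])
      also have "\<dots> = mat 1" by (simp add: pp)
      finally show "\<psi> ** s ** \<psi> ** (\<psi> ** matrix_inv s ** \<psi>) = mat 1" .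
    qed
    then show ?case using invH genconj[OF inv] unfolding H_def by metis
  next
    case (mult g h)
    have "\<psi> ** (g ** h) ** \<psi> = - ((\<psi> ** g ** \<psi>) ** (\<psi> ** h ** \<psi>))"
      by (simp add: matrix_mul_assoc pp2 neg_mult_left)
    then show ?case using mult negH multH unfolding H_def by metis
  qed
  have GK: "gen_group {A, \<psi>} \<subseteq> {x. \<exists>h\<in>H. x = h \<or> x = \<psi> ** h}"
  proof
    fix g assume "g \<in> gen_group {A, \<psi>}"
    then show "g \<in> {x. \<exists>h\<in>H. x = h \<or> x = \<psi> ** h}"
    proof (induction rule: gen_group.induct)
      case one then show ?case using oneH by blast
    next
      case (gen s)
      then show ?case using AH oneH by (auto intro: bexI[of _ "mat 1"])
    next
      case (inv s)
      then have "s = A \<or> s = \<psi>" by simp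
      then show ?case
      proof
        assume "s = A" then show ?thesis using invH AH by blast
      next
        assume "s = \<psi>"
        then have "matrix_inv s = \<psi> ** (- mat 1)" by (simp add: ipsi neg_mult_right)
        then show ?thesis using mIH by blast
      qed
    next
      case (mult g h)
      obtain h1 where h1: "h1 \<in> H" "g = h1 \<or> g = \<psi> ** h1" using mult by blast
      obtain h2 where h2: "h2 \<in> H" "h = h2 \<or> h = \<psi> ** h2" using mult by blast
      show ?case using h1(2)
      proof
        assume g: "g = h1"
        show ?thesis using h2(2)
        proof
          assume "h = h2" then show ?thesis using g h1 h2 multH by blast
        next
          assume h: "h = \<psi> ** h2"
          have "g ** h = \<psi> ** ((\<psi> ** h1 ** \<psi>) ** (- h2))"
            unfolding g h by (simp add: matrix_mul_assoc pp neg_mult_left neg_mult_right)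
          moreover have "(\<psi> ** h1 ** \<psi>) ** (- h2) \<in> H" using conj h1 h2 negH multH by blast
          ultimately show ?thesis by blast
        qed
      next
        assume g: "g = \<psi> ** h1"
        show ?thesis using h2(2)
        proof
          assume h: "h = h2"
          have "g ** h = \<psi> ** (h1 ** h2)" unfolding g h by (simp add: matrix_mul_assoc)
          then show ?thesis using h1 h2 multH by blast
        next
          assume h: "h = \<psi> ** h2"
          have "g ** h = (\<psi> ** h1 ** \<psi>) ** h2" unfolding g h by (simp add: matrix_mul_assoc)
          then show ?thesis using conj h1 h2 multH by blast
        qed
      qed
    qed
  qed
  show ?thesis unfolding discrete_rep_def
    by (rule ext_disc[OF discH oneH clH detsH dpsi GK])
qed

theorem theorem8:
  fixes A B :: cmat and \<gamma> :: complex and w :: "int list"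
  assumes "det A = 1" and "det B = 1"
    and "irreducible_rep A B"
    and "principal_char A B = (\<gamma>, 0, -4)"
    and "good_word w"
  shows "\<exists>A' B' :: cmat. det A' = 1 \<and> det B' = 1 \<and>
           principal_char A' B' = (poly (map_poly of_int (word_poly w)) \<gamma>, 0, -4) \<and>
           (discrete_rep A B \<longrightarrow> discrete_rep A' B')"
proof -
  have gAB: "gamma A B = \<gamma>" and tA: "(trace A)^2 = 4" and tB2: "(trace B)^2 = 0"
    using assms(4) unfolding principal_char_def by auto
  have tB: "trace B = 0" using tB2 by simp
  have wne: "w \<noteq> []" using assms(5) unfolding good_word_def by auto
  obtain \<epsilon> p q r where e: "\<epsilon>^2 = 1" "p^2 + q*r = 0" and Af: "A = mat2 (\<epsilon>*(1+p)) (\<epsilon>*q) (\<epsilon>*r) (\<epsilon>*(1-p))"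
    using para_form[OF assms(1) tA] by blast
  define W where "W = word_eval w A B"
  have dW: "det W = 1" unfolding W_def by (rule det_word[OF assms(1,2)])
  have gW: "gamma A W = poly (map_poly of_int (word_poly w)) \<gamma>"
    unfolding W_def word_poly_eq[OF wne] gAB[symmetric] by (rule gamma_word[OF assms(1) tA assms(2) tB wne])
  define L where "L = lam p q r W"
  have gL: "gamma A W = L^2" unfolding L_def by (rule gamma_lam[OF e Af dW])
  show ?thesis
  proof (cases "L = 0")
    case True
    then have "poly (map_poly of_int (word_poly w)) \<gamma> = 0" using gW gL by simp
    then show ?thesis using zero_case by auto
  next
    case False
    define t where "t = - trace W / L"
    define U where "U = Um p q r t"
    define \<psi> where "\<psi> = W ** U"
    have dU: "det U = 1" unfolding U_def by (rule det_U[OF e(2)])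
    have dpsi: "det \<psi> = 1" unfolding \<psi>_def using dW dU by (simp add: det_mul)
    have tpsi: "trace \<psi> = 0" unfolding \<psi>_def U_def trace_WU t_def L_def[symmetric] using False by simp
    have gpsi: "gamma A \<psi> = L^2"
      using gamma_lam[OF e Af dpsi] unfolding \<psi>_def U_def L4(2)[OF e(2)] L_def by simp
    have cj: "\<psi> ** A ** matrix_inv \<psi> = W ** A ** matrix_inv W"
    proof -
      have AU: "A ** U = U ** A" unfolding Af U_def by (rule comm_AU)
      have "\<psi> ** A ** matrix_inv \<psi> = W ** (U ** A) ** matrix_inv U ** matrix_inv W"
        unfolding \<psi>_def inv_mult[OF dW dU] by (simp add: matrix_mul_assoc)
      also have "\<dots> = W ** A ** matrix_inv W"
        unfolding AU[symmetric] by (simp add: matrix_mul_assoc rinv[OF dU])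
      finally show ?thesis .
    qed
    have dets0: "\<forall>s\<in>{A, B}. det s = 1" using assms(1,2) by simp
    have A0: "A \<in> gen_group {A, B}" "B \<in> gen_group {A, B}" by (simp_all add: gen_group.gen)
    have "matrix_inv A \<in> gen_group {A, B}" by (simp add: gen_group.inv)
    then have Win: "W \<in> gen_group {A, B}" unfolding W_def using A0 by (simp add: word_in)
    have pc: "principal_char A \<psi> = (poly (map_poly of_int (word_poly w)) \<gamma>, 0, -4)"
      unfolding principal_char_def using gpsi gW gL tA tpsi by simp
    show ?thesis
      using conj_disc[OF assms(1,2) tB dW Win dpsi tpsi cj] assms(1) dpsi pc by blast
  qed
qed

end
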